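(* Let $E$ be an IL FS encoder with $s$ states and Kraft matrix $K$, and let $L_{\max}=\max_{z\in\mathcal{Z},x\in\mathcal{X}}L[f(z,x)]$. Then for every positive integer $\ell$ and all $z,z'\in\mathcal{Z}$, $$[K^\ell]_{zz'}=\sum_{\{x^\ell\in\mathcal{X}^\ell:\ g(z,x^\ell)=z'\}}2^{-L[f(z,x^\ell)]}\le 1+\ell L_{\max},$$ and consequently, for every $z\in\mathcal{Z}$, $$\sum_{x^\ell\in\mathcal{X}^\ell}2^{-L[f(z,x^\ell)]}\le s(1+\ell L_{\max}).$$
   Context: A finite-state (FS) encoder is a quintuple $E=(\mathcal{X},\mathcal{Y},\mathcal{Z},f,g)$, where $\mathcal{X}$ is a finite source alphabet of size $\alpha$, $\mathcal{Y}$ is a finite set of binary strings (possibly containing the empty string, of length $0$), $\mathcal{Z}$ is a finite set of $s$ states, $f:\mathcal{Z}\times\mathcal{X}\to\mathcal{Y}$ is the output function and $g:\mathcal{Z}\times\mathcal{X}\to\mathcal{Z}$ is the next-state function. For $z\in\mathcal{Z}$ and $x^n=(x_1,\dots,x_n)\in\mathcal{X}^n$, set $z_1=z$, $z_{i+1}=g(z_i,x_i)$; write $g(z,x^n)=z_{n+1}$ and let $f(z,x^n)$ denote the binary string obtained by concatenating $f(z_1,x_1),\dots,f(z_n,x_n)$; its length is $L[f(z,x^n)]=\sum_{i=1}^n L[f(z_i,x_i)]$, where $L(\cdot)$ denotes the length of a binary string. The encoder is information lossless (IL) if for every $z\in\mathcal{Z}$ and every $n\ge1$, the map $x^n\mapsto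 (f(z,x^n),g(z,x^n))$ is injective on $\mathcal{X}^n$. The Kraft matrix of $E$ is the $s\times s$ nonnegative matrix $K$ with entries $K_{zz'}=\sum_{\{x\in\mathcal{X}:\ g(z,x)=z'\}}2^{-L[f(z,x)]}$ (an empty sum is $0$). *)

theory Defs
  imports "HOL-Analysis.Analysis"
begin

text \<open>A finite-state encoder: source alphabet = finite type 'x, states = finite type 'z,
  output function f (binary strings as bool lists), next-state function g.\<close>

fun fs_state :: "('z \<Rightarrow> 'x \<Rightarrow> 'z) \<Rightarrow> 'z \<Rightarrow> 'x list \<Rightarrow> 'z" where
  "fs_state g z [] = z"
| "fs_state g z (x # xs) = fs_state g (g z x) xs"

fun fs_out :: "('z \<Rightarrow> 'x \<Rightarrow> bool list) \<Rightarrow> ('z \<Rightarrow> 'x \<Rightarrow> 'z) \<Rightarrow> 'z \<Rightarrow> 'x list \<Rightarrow> bool list" where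
  "fs_out f g z [] = []"
| "fs_out f g z (x # xs) = f z x @ fs_out f g (g z x) xs"

definition info_lossless :: "('z \<Rightarrow> 'x \<Rightarrow> bool list) \<Rightarrow> ('z \<Rightarrow> 'x \<Rightarrow> 'z) \<Rightarrow> bool" where
  "info_lossless f g \<longleftrightarrow>
     (\<forall>z n. n \<ge> 1 \<longrightarrow> inj_on (\<lambda>xs. (fs_out f g z xs, fs_state g z xs)) {xs. length xs = n})"

definition kraft_matrix :: "('z::finite \<Rightarrow> 'x::finite \<Rightarrow> bool list) \<Rightarrow> ('z \<Rightarrow> 'x \<Rightarrow> 'z) \<Rightarrow> real^'z^'z" where
  "kraft_matrix f g = (\<chi> z z'. \<Sum>x\<in>{x. g z x = z'}. 2 powr (- real (length (f z x))))"

fun mat_pow :: "real^'n^'n \<Rightarrow> nat \<Rightarrow> real^'n^'n" where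
  "mat_pow A 0 = mat 1"
| "mat_pow A (Suc n) = mat_pow A n ** A"

definition L_max :: "('z::finite \<Rightarrow> 'x::finite \<Rightarrow> bool list) \<Rightarrow> nat" where
  "L_max f = Max {length (f z x) | z x. True}"

end

theory Submission
  imports Defs
begin

lemma fs_state_snoc: "fs_state g z (xs @ [x]) = g (fs_state g z xs) x"
  by (induct xs arbitrary: z) auto

lemma fs_out_snoc: "fs_out f g z (xs @ [x]) = fs_out f g z xs @ f (fs_state g z xs) x"
  by (induct xs arbitrary: z) auto

lemma len_f: "length (f z x) \<le> L_max (f :: 'z::finite \<Rightarrow> 'x::finite \<Rightarrow> bool list)"
proof -
  have "{length (f z x) |z x. True} = (\<lambda>(z,x). length (f z x)) ` UNIV" by auto
  then have "finite {length (f z x) |z x. True}" by simp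
  then show ?thesis unfolding L_max_def by (rule Max_ge) auto
qed

lemma len_out: "length (fs_out f g z xs) \<le> length xs * L_max (f :: 'z::finite \<Rightarrow> 'x::finite \<Rightarrow> bool list)"
proof (induct xs arbitrary: z)
  case Nil then show ?case by simp
next
  case (Cons x xs)
  have "length (f z x) \<le> L_max f" by (rule len_f)
  with Cons[of "g z x"] show ?case by simp
qed

lemma finite_len: "finite {xs :: ('x::finite) list. length xs = n}"
  using finite_lists_length_eq[of "UNIV :: 'x set" n] by simp

lemma W_snoc: "(2::real) powr (- real (length (fs_out f g z (ys @ [x]))))
   = 2 powr (- real (length (fs_out f g z ys))) * 2 powr (- real (length (f (fs_state g z ys) x)))"
  by (simp add: fs_out_snoc powr_add[symmetric] algebra_simps)

lemma mat_pow_paths: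
  fixes f :: "'z::finite \<Rightarrow> 'x::finite \<Rightarrow> bool list" and g :: "'z \<Rightarrow> 'x \<Rightarrow> 'z"
  shows "mat_pow (kraft_matrix f g) n $ z $ z'
     = (\<Sum>xs\<in>{xs. length xs = n \<and> fs_state g z xs = z'}. 2 powr (- real (length (fs_out f g z xs))))"
proof (induct n arbitrary: z')
  case 0
  show ?case
  proof (cases "z = z'")
    case True
    then have "{xs. length xs = 0 \<and> fs_state g z xs = z'} = {[]}" by auto
    then show ?thesis using True by (simp add: mat_def)
  next
    case False
    then have "{xs. length xs = 0 \<and> fs_state g z xs = z'} = {}" by auto
    then show ?thesis using False by (simp add: mat_def)
  qed
next
  case (Suc n)
  define W where "W ys = (2::real) powr (- real (length (fs_out f g z ys)))" for ys
  define c where "c w x = (2::real) powr (- real (length (f w x)))" for w x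
  define A where "A = {xs :: 'x list. length xs = n}"
  have fA: "finite A" unfolding A_def by (rule finite_len)
  have "mat_pow (kraft_matrix f g) (Suc n) $ z $ z'
      = (\<Sum>w\<in>UNIV. (\<Sum>ys\<in>{xs. length xs = n \<and> fs_state g z xs = w}. W ys) * (\<Sum>x\<in>{x. g w x = z'}. c w x))"
    by (simp add: matrix_matrix_mult_def Suc W_def) (simp add: kraft_matrix_def c_def)
  also have "\<dots> = (\<Sum>w\<in>UNIV. \<Sum>ys\<in>{ys\<in>A. fs_state g z ys = w}. \<Sum>x\<in>{x. g (fs_state g z ys) x = z'}. W ys * c (fs_state g z ys) x)"
    by (rule sum.cong) (auto simp: sum_product A_def intro!: sum.cong)
  also have "\<dots> = (\<Sum>ys\<in>A. \<Sum>x\<in>{x. g (fs_state g z ys) x = z'}. W ys * c (fs_state g z ys) x)"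
    by (rule sum.group) (auto simp: fA)
  also have "\<dots> = (\<Sum>ys\<in>A. \<Sum>x\<in>{x. g (fs_state g z ys) x = z'}. W (ys @ [x]))"
    by (simp add: W_def c_def W_snoc)
  also have "\<dots> = (\<Sum>(ys,x)\<in>(SIGMA ys:A. {x. g (fs_state g z ys) x = z'}). W (ys @ [x]))"
    by (rule sum.Sigma) (auto simp: fA)
  also have "\<dots> = (\<Sum>p\<in>(SIGMA ys:A. {x. g (fs_state g z ys) x = z'}). W (fst p @ [snd p]))"
    by (simp add: case_prod_beta)
  also have "\<dots> = (\<Sum>xs\<in>(\<lambda>p. fst p @ [snd p]) ` (SIGMA ys:A. {x. g (fs_state g z ys) x = z'}). W xs)"
    by (rule sum.reindex[symmetric, unfolded comp_def]) (auto simp: inj_on_def)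
  also have "(\<lambda>p. fst p @ [snd p]) ` (SIGMA ys:A. {x. g (fs_state g z ys) x = z'})
      = {xs. length xs = Suc n \<and> fs_state g z xs = z'}"
  proof
    show "(\<lambda>p. fst p @ [snd p]) ` (SIGMA ys:A. {x. g (fs_state g z ys) x = z'})
      \<subseteq> {xs. length xs = Suc n \<and> fs_state g z xs = z'}"
      by (auto simp: A_def fs_state_snoc)
  next
    show "{xs. length xs = Suc n \<and> fs_state g z xs = z'} \<subseteq> (\<lambda>p. fst p @ [snd p]) ` (SIGMA ys:A. {x. g (fs_state g z ys) x = z'})"
    proof
      fix xs assume xs: "xs \<in> {xs. length xs = Suc n \<and> fs_state g z xs = z'}"
      then have "xs \<noteq> []" by auto
      then have e: "xs = butlast xs @ [last xs]" by simp
      obtain ys x where "xs = ys @ [x]" using e by blast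
      with xs show "xs \<in> (\<lambda>p. fst p @ [snd p]) ` (SIGMA ys:A. {x. g (fs_state g z ys) x = z'})"
        by (auto simp: A_def fs_state_snoc image_iff)
    qed
  qed
  finally show ?case by (simp add: W_def)
qed

lemma sum_short_words: "(\<Sum>w\<in>{w :: bool list. length w \<le> N}. (2::real) powr (- real (length w))) = real N + 1"
proof (induct N)
  case 0
  have "{w :: bool list. length w \<le> 0} = {[]}" by auto
  then show ?case by simp
next
  case (Suc N)
  have e: "{w :: bool list. length w \<le> Suc N} = {w. length w \<le> N} \<union> {w. length w = Suc N}" by auto
  have c: "card {w :: bool list. length w = Suc N} = 2 ^ Suc N"
    using card_lists_length_eq[of "UNIV :: bool set" "Suc N"] by simp
  have "(\<Sum>w\<in>{w :: bool list. length w = Suc N}. (2::real) powr (- real (length w)))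
      = (\<Sum>w\<in>{w :: bool list. length w = Suc N}. 2 powr (- real (Suc N)))"
    by (rule sum.cong) auto
  also have "\<dots> = 2 ^ Suc N * 2 powr (- real (Suc N))" using c by simp
  also have "\<dots> = 2 powr real (Suc N) * 2 powr (- real (Suc N))"
    by (simp only: powr_realpow[symmetric] zero_less_numeral)
  also have "\<dots> = 1" by (simp only: powr_add[symmetric]) simp
  finally have s: "(\<Sum>w\<in>{w :: bool list. length w = Suc N}. (2::real) powr (- real (length w))) = 1" .
  have "(\<Sum>w\<in>{w :: bool list. length w \<le> Suc N}. (2::real) powr (- real (length w)))
     = (\<Sum>w\<in>{w :: bool list. length w \<le> N}. (2::real) powr (- real (length w)))
     + (\<Sum>w\<in>{w :: bool list. length w = Suc N}. (2::real) powr (- real (length w)))"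
    unfolding e by (rule sum.union_disjoint) (auto simp: finite_len finite_lists_length_le[of UNIV, simplified])
  then show ?case using Suc s by simp
qed

theorem mainTheorem2:
  fixes f :: "'z::finite \<Rightarrow> 'x::finite \<Rightarrow> bool list" and g :: "'z \<Rightarrow> 'x \<Rightarrow> 'z" and l :: nat
  assumes "info_lossless f g"
    and "l \<ge> 1"
  shows "(\<forall>z z'. mat_pow (kraft_matrix f g) l $ z $ z'
              = (\<Sum>xs\<in>{xs. length xs = l \<and> fs_state g z xs = z'}. 2 powr (- real (length (fs_out f g z xs))))
          \<and> (\<Sum>xs\<in>{xs. length xs = l \<and> fs_state g z xs = z'}. 2 powr (- real (length (fs_out f g z xs))))
              \<le> 1 + real l * real (L_max f))
       \<and> (\<forall>z. (\<Sum>xs\<in>{xs. length xs = l}. 2 powr (- real (length (fs_out f g z xs))))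
              \<le> real CARD('z) * (1 + real l * real (L_max f)))"
proof -
  have IL: "inj_on (\<lambda>xs. (fs_out f g z xs, fs_state g z xs)) {xs. length xs = l}" for z
    using assms unfolding info_lossless_def by blast
  have bound: "(\<Sum>xs\<in>{xs. length xs = l \<and> fs_state g z xs = z'}. 2 powr (- real (length (fs_out f g z xs))))
              \<le> 1 + real l * real (L_max f)" for z z'
  proof -
    define S where "S = {xs. length xs = l \<and> fs_state g z xs = z'}"
    have fS: "finite S" unfolding S_def by (rule finite_subset[OF _ finite_len[of l]]) auto
    have inj: "inj_on (fs_out f g z) S"
    proof (rule inj_onI)
      fix xs ys assume "xs \<in> S" "ys \<in> S" "fs_out f g z xs = fs_out f g z ys"
      then show "xs = ys" using IL[of z] unfolding S_def inj_on_def by auto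
    qed
    have sub: "fs_out f g z ` S \<subseteq> {w. length w \<le> l * L_max f}"
      using len_out[of f g z] unfolding S_def by auto
    have "(\<Sum>xs\<in>S. (2::real) powr (- real (length (fs_out f g z xs))))
        = (\<Sum>w\<in>fs_out f g z ` S. 2 powr (- real (length w)))"
      by (rule sum.reindex[symmetric, unfolded comp_def]) (rule inj)
    also have "\<dots> \<le> (\<Sum>w\<in>{w :: bool list. length w \<le> l * L_max f}. 2 powr (- real (length w)))"
      by (rule sum_mono2) (auto simp: sub finite_lists_length_le[of UNIV, simplified])
    also have "\<dots> = real (l * L_max f) + 1" by (rule sum_short_words)
    finally show ?thesis unfolding S_def by simp
  qed
  have part3: "(\<Sum>xs\<in>{xs. length xs = l}. 2 powr (- real (length (fs_out f g z xs))))
              \<le> real CARD('z) * (1 + real l * real (L_max f))" for z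
  proof -
    have "(\<Sum>xs\<in>{xs. length xs = l}. (2::real) powr (- real (length (fs_out f g z xs))))
       = (\<Sum>z'\<in>UNIV. \<Sum>xs\<in>{xs\<in>{xs. length xs = l}. fs_state g z xs = z'}. 2 powr (- real (length (fs_out f g z xs))))"
      by (rule sum.group[symmetric]) (auto simp: finite_len)
    also have "\<dots> \<le> (\<Sum>z'\<in>(UNIV::'z set). 1 + real l * real (L_max f))"
      by (rule sum_mono) (use bound in simp)
    also have "\<dots> = real CARD('z) * (1 + real l * real (L_max f))" by simp
    finally show ?thesis .
  qed
  show ?thesis using bound part3 mat_pow_paths by auto
qed

end
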